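(* Let $\tau,t\in\mathbb{R}$ and let $P_n(x;\tau,t)$ be the monic orthogonal polynomials for the weight $\omega(x;\tau,t)=\exp(-x^6+\tau x^4+tx^2)$ on $\mathbb{R}$, with recurrence coefficients $\beta_n$. Write $C_n=\beta_{n-1}+\beta_n+\beta_{n+1}$. Then for $n\ge1$ $$\frac{d^2P_n}{dx^2}+R_n(x;\tau,t)\frac{dP_n}{dx}+T_n(x;\tau,t)P_n=0,$$ where $$R_n=2x\left\{t-3x^4+2\tau x^2-\frac{2\{6x^2-2\tau+3(\beta_n+\beta_{n+1})\}}{6x^4-4\tau x^2-2t+6\beta_nC_n+6\beta_{n+1}C_{n+1}+(\beta_n+\beta_{n+1})(6x^2-4\tau)}\right\},$$ and \begin{align*} T_n&=2\beta_n(3C_n-2\tau+9x^2)-4x^2\beta_n(3C_n-2\tau+3x^2)\{\beta_n(3C_n-2\tau+3x^2)-t+3x^4-2\tau x^2\}\\ &\quad+\beta_{n}\{6C_{n-1}\beta_{n-1}+6C_n\beta_n+(\beta_{n-1}+\beta_n)(6x^2-4\tau)-2t+6x^4-4\tau x^2\}\\ &\qquad\times\{6C_n\beta_n+6C_{n+1}\beta_{n+1}+(\beta_n+\beta_{n+1})(6x^2-4\tau)-2t+6x^4-4\tau x^2\}\\ &\quad+\frac{4x^2\beta_n(3C_n-2\tau+3x^2)\{3(\beta_n+\beta_{n+1})-2\tau+6x^2\}}{2\tau(\beta_n+\beta_{n+1})-3x^2(\beta_n+\beta_{n+1})-3C_n\beta_n-3C_{n+1}\beta_{n+1}+t-3x^4+2\tau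 x^2}. \end{align*}
   Context: The monic polynomials $P_n(x;\tau,t)$ of exact degree $n$ are orthogonal with respect to $\omega(x;\tau,t)$ on $\mathbb{R}$. They satisfy $P_{n+1}(x)=xP_n(x)-\beta_nP_{n-1}(x)$ with $P_{-1}=0$, $P_0=1$, where $\beta_n>0$ for $n\ge1$. The convention $\beta_0=0$ is used. *)

theory Defs
  imports "HOL-Analysis.Analysis" "HOL-Computational_Algebra.Polynomial"
begin

definition omega :: "real \<Rightarrow> real \<Rightarrow> real \<Rightarrow> real" where
  "omega \<tau> t x = exp (- (x ^ 6) + \<tau> * x ^ 4 + t * x ^ 2)"

definition monic_OPS :: "(real \<Rightarrow> real) \<Rightarrow> (nat \<Rightarrow> real poly) \<Rightarrow> bool" where
  "monic_OPS w P \<longleftrightarrow>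
     (\<forall>n. degree (P n) = n \<and> lead_coeff (P n) = 1) \<and>
     (\<forall>m n. m \<noteq> n \<longrightarrow>
        (\<integral>x. poly (P m) x * poly (P n) x * w x \<partial>lborel) = 0)"

definition rec_coeffs :: "(nat \<Rightarrow> real poly) \<Rightarrow> (nat \<Rightarrow> real) \<Rightarrow> bool" where
  "rec_coeffs P \<beta> \<longleftrightarrow> \<beta> 0 = 0 \<and>
     (\<forall>n. P (Suc n) = [:0, 1:] * P n - smult (\<beta> n) (if n = 0 then 0 else P (n - 1)))"

text \<open>C n = beta(n-1) + beta n + beta(n+1); only used for n \<ge> 1, or multiplied by beta 0 = 0.\<close>
definition Cc :: "(nat \<Rightarrow> real) \<Rightarrow> nat \<Rightarrow> real" where
  "Cc \<beta> n = \<beta> (n - 1) + \<beta> n + \<beta> (n + 1)"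

definition Rn :: "(nat \<Rightarrow> real) \<Rightarrow> real \<Rightarrow> real \<Rightarrow> nat \<Rightarrow> real \<Rightarrow> real" where
  "Rn \<beta> \<tau> t n x = 2 * x * (t - 3 * x ^ 4 + 2 * \<tau> * x ^ 2
     - 2 * (6 * x ^ 2 - 2 * \<tau> + 3 * (\<beta> n + \<beta> (n + 1)))
       / (6 * x ^ 4 - 4 * \<tau> * x ^ 2 - 2 * t + 6 * \<beta> n * Cc \<beta> n
          + 6 * \<beta> (n + 1) * Cc \<beta> (n + 1) + (\<beta> n + \<beta> (n + 1)) * (6 * x ^ 2 - 4 * \<tau>)))"

definition Tn :: "(nat \<Rightarrow> real) \<Rightarrow> real \<Rightarrow> real \<Rightarrow> nat \<Rightarrow> real \<Rightarrow> real" where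
  "Tn \<beta> \<tau> t n x =
     2 * \<beta> n * (3 * Cc \<beta> n - 2 * \<tau> + 9 * x ^ 2)
     - 4 * x ^ 2 * \<beta> n * (3 * Cc \<beta> n - 2 * \<tau> + 3 * x ^ 2)
         * (\<beta> n * (3 * Cc \<beta> n - 2 * \<tau> + 3 * x ^ 2) - t + 3 * x ^ 4 - 2 * \<tau> * x ^ 2)
     + \<beta> n * (6 * Cc \<beta> (n - 1) * \<beta> (n - 1) + 6 * Cc \<beta> n * \<beta> n
               + (\<beta> (n - 1) + \<beta> n) * (6 * x ^ 2 - 4 * \<tau>) - 2 * t + 6 * x ^ 4 - 4 * \<tau> * x ^ 2)
         * (6 * Cc \<beta> n * \<beta> n + 6 * Cc \<beta> (n + 1) * \<beta> (n + 1)
               + (\<beta> n + \<beta> (n + 1)) * (6 * x ^ 2 - 4 * \<tau>) - 2 * t + 6 * x ^ 4 - 4 * \<tau> * x ^ 2)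
     + 4 * x ^ 2 * \<beta> n * (3 * Cc \<beta> n - 2 * \<tau> + 3 * x ^ 2)
         * (3 * (\<beta> n + \<beta> (n + 1)) - 2 * \<tau> + 6 * x ^ 2)
       / (2 * \<tau> * (\<beta> n + \<beta> (n + 1)) - 3 * x ^ 2 * (\<beta> n + \<beta> (n + 1))
          - 3 * Cc \<beta> n * \<beta> n - 3 * Cc \<beta> (n + 1) * \<beta> (n + 1) + t - 3 * x ^ 4 + 2 * \<tau> * x ^ 2)"

end

theory Submission
  imports Defs "HOL-Probability.Distributions" "HOL-Real_Asymp.Real_Asymp"
begin

lemma cubic_bound:
  fixes \<tau> s :: real
  shows "\<exists>c. \<forall>y::real. y \<ge> 0 \<longrightarrow> - (y^3) + \<tau>*y^2 + s*y \<le> c"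
proof -
  define a where "a = \<bar>\<tau>\<bar>"
  define b where "b = \<bar>s\<bar>"
  define Y where "Y = a + b + 1"
  have a0: "a \<ge> 0" and b0: "b \<ge> 0" and Y1: "Y \<ge> 1" by (auto simp: a_def b_def Y_def)
  show ?thesis
  proof (intro exI allI impI)
    fix y :: real assume y0: "y \<ge> 0"
    have t1: "\<tau>*y^2 \<le> a*y^2" unfolding a_def by (intro mult_right_mono) auto
    have t2: "s*y \<le> b*y" unfolding b_def using y0 by (intro mult_right_mono) auto
    show "- (y^3) + \<tau>*y^2 + s*y \<le> a*Y^2 + b*Y"
    proof (cases "y \<le> Y")
      case True
      have "a*y^2 \<le> a*Y^2" using True y0 a0 by (intro mult_left_mono power_mono) auto
      moreover have "b*y \<le> b*Y" using True b0 by (intro mult_left_mono) auto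
      moreover have "y^3 \<ge> 0" using y0 by simp
      ultimately show ?thesis using t1 t2 by linarith
    next
      case False
      then have yY: "y \<ge> Y" by simp
      have "y^3 = y * y^2" by (simp add: power3_eq_cube power2_eq_square)
      also have "\<dots> \<ge> Y * y^2" using yY by (intro mult_right_mono) auto
      finally have "y^3 \<ge> a*y^2 + b*y^2 + y^2" unfolding Y_def by (simp add: algebra_simps)
      moreover have "b*y^2 \<ge> b*y" using yY Y1 b0 by (intro mult_left_mono) (auto simp: power2_eq_square)
      moreover have "a*Y^2 + b*Y \<ge> 0" using a0 b0 Y1 by simp
      ultimately show ?thesis using t1 t2 zero_le_power2[of y] by linarith
    qed
  qed
qed

lemma exp_bound:
  fixes \<tau> s :: real
  shows "\<exists>c. \<forall>x::real. exp (- (x^6) + \<tau>*x^4 + s*x^2) \<le> c * exp (- (x^2))"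
proof -
  obtain c where c: "\<And>y::real. y \<ge> 0 \<Longrightarrow> - (y^3) + \<tau>*y^2 + (s+1)*y \<le> c"
    using cubic_bound[of \<tau> "s+1"] by blast
  show ?thesis
  proof (intro exI allI)
    fix x :: real
    have "- ((x^2)^3) + \<tau>*(x^2)^2 + (s+1)*x^2 \<le> c" by (rule c) simp
    then have "- (x^6) + \<tau>*x^4 + s*x^2 \<le> c + - (x^2)"
      by (simp add: power_mult[symmetric] algebra_simps)
    then have "exp (- (x^6) + \<tau>*x^4 + s*x^2) \<le> exp (c + - (x^2))" by simp
    also have "exp (c + - (x^2)) = exp c * exp (- (x^2))" by (rule exp_add)
    finally show "exp (- (x^6) + \<tau>*x^4 + s*x^2) \<le> exp c * exp (- (x^2))" .
  qed
qed

lemma abs_pow_le_exp: "\<bar>x::real\<bar>^j \<le> exp (real j * x^2)"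
proof -
  have "0 \<le> (\<bar>x\<bar> - 1/2)^2" by simp
  then have "\<bar>x\<bar> \<le> 1 + x^2" by (simp add: power2_diff power2_abs field_simps)
  also have "\<dots> \<le> exp (x^2)" by (rule exp_ge_add_one_self)
  finally have "\<bar>x\<bar>^j \<le> exp (x^2)^j" by (intro power_mono) auto
  also have "\<dots> = exp (real j * x^2)" by (simp add: exp_of_nat_mult)
  finally show ?thesis .
qed

lemma poly_abs_le: "\<bar>poly p (x::real)\<bar> \<le> (\<Sum>i\<le>degree p. \<bar>coeff p i\<bar>) * exp (real (degree p) * x^2)"
proof -
  have "\<bar>poly p x\<bar> = \<bar>\<Sum>i\<le>degree p. coeff p i * x^i\<bar>" by (simp add: poly_altdef)
  also have "\<dots> \<le> (\<Sum>i\<le>degree p. \<bar>coeff p i\<bar> * \<bar>x\<bar>^i)"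
    by (rule order_trans[OF sum_abs]) (simp add: abs_mult power_abs)
  also have "\<dots> \<le> (\<Sum>i\<le>degree p. \<bar>coeff p i\<bar> * exp (real (degree p) * x^2))"
  proof (intro sum_mono mult_left_mono)
    fix i assume "i \<in> {..degree p}"
    then have "real i * x^2 \<le> real (degree p) * x^2" by (intro mult_right_mono) auto
    then show "\<bar>x\<bar>^i \<le> exp (real (degree p) * x^2)"
      using abs_pow_le_exp[of x i] by (meson exp_le_cancel_iff order_trans)
  qed auto
  finally show ?thesis by (simp add: sum_distrib_right)
qed

lemma poly_w_bound:
  "\<exists>M. \<forall>x. \<bar>poly p x * omega \<tau> t x\<bar> \<le> M * exp (- (x^2))"
proof -
  obtain c where c: "\<And>x::real. exp (- (x^6) + \<tau>*x^4 + (t + real (degree p))*x^2) \<le> c * exp (- (x^2))"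
    using exp_bound by blast
  define K where "K = (\<Sum>i\<le>degree p. \<bar>coeff p i\<bar>)"
  have K0: "K \<ge> 0" unfolding K_def by (simp add: sum_nonneg)
  show ?thesis
  proof (intro exI allI)
    fix x
    have "\<bar>poly p x * omega \<tau> t x\<bar> = \<bar>poly p x\<bar> * omega \<tau> t x" by (simp add: abs_mult omega_def)
    also have "\<dots> \<le> K * exp (real (degree p) * x^2) * omega \<tau> t x"
      using poly_abs_le[of p x] by (intro mult_right_mono) (auto simp: K_def omega_def)
    also have "\<dots> = K * exp (- (x^6) + \<tau>*x^4 + (t + real (degree p))*x^2)"
    proof -
      have "exp (real (degree p) * x^2) * exp (- (x^6) + \<tau>*x^4 + t*x^2) = exp (- (x^6) + \<tau>*x^4 + (t + real (degree p))*x^2)"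
        by (subst exp_add[symmetric]) (rule arg_cong[where f=exp], simp add: algebra_simps)
      then show ?thesis by (simp add: omega_def mult.assoc)
    qed
    also have "\<dots> \<le> K * (c * exp (- (x^2)))" using c K0 by (intro mult_left_mono) auto
    finally show "\<bar>poly p x * omega \<tau> t x\<bar> \<le> (K*c) * exp (- (x^2))" by simp
  qed
qed

lemma integrable_gauss: "integrable lborel (\<lambda>x::real. exp (- (x^2)))"
  using has_bochner_integral_even_function[OF gaussian_moment_0]
  by (auto simp: has_bochner_integral_iff)

lemma omega_cont: "continuous_on UNIV (omega \<tau> t)"
  unfolding omega_def by (intro continuous_intros)

lemma integrable_poly_w: "integrable lborel (\<lambda>x. poly p x * omega \<tau> t x)"
proof -
  obtain M where M: "\<And>x. \<bar>poly p x * omega \<tau> t x\<bar> \<le> M * exp (- (x^2))"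
    using poly_w_bound by blast
  show ?thesis
  proof (rule Bochner_Integration.integrable_bound[OF integrable_mult_right[OF integrable_gauss, of M]])
    show "(\<lambda>x. poly p x * omega \<tau> t x) \<in> borel_measurable lborel"
      unfolding measurable_lborel2 omega_def by (intro borel_measurable_continuous_onI continuous_intros)
    show "AE x in lborel. norm (poly p x * omega \<tau> t x) \<le> norm (M * exp (- (x^2)))"
      using M by (auto intro: order_trans[OF _ abs_ge_self])
  qed
qed

definition vpol :: "real \<Rightarrow> real \<Rightarrow> real poly" where
  "vpol \<tau> t = [:0, -2*t, 0, -4*\<tau>, 0, 6:]"

lemma poly_vpol: "poly (vpol \<tau> t) x = 6*x^5 - 4*\<tau>*x^3 - 2*t*x"
  by (simp add: vpol_def algebra_simps power_numeral_reduce)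

lemma omega_deriv: "(omega \<tau> t has_real_derivative (- poly (vpol \<tau> t) x * omega \<tau> t x)) (at x)"
  unfolding omega_def poly_vpol
  by (rule derivative_eq_intros refl | simp)+

lemma poly_w_lim:
  "((\<lambda>x. poly p x * omega \<tau> t x) \<longlongrightarrow> 0) at_top"
  "((\<lambda>x. poly p x * omega \<tau> t x) \<longlongrightarrow> 0) at_bot"
proof -
  obtain M where M: "\<And>x. \<bar>poly p x * omega \<tau> t x\<bar> \<le> M * exp (- (x^2))"
    using poly_w_bound by blast
  have l1: "((\<lambda>x::real. M * exp (- (x^2))) \<longlongrightarrow> 0) at_top" by real_asymp
  have l2: "((\<lambda>x::real. M * exp (- (x^2))) \<longlongrightarrow> 0) at_bot" by real_asymp
  show "((\<lambda>x. poly p x * omega \<tau> t x) \<longlongrightarrow> 0) at_top"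
    by (rule Lim_null_comparison[OF _ l1]) (use M in auto)
  show "((\<lambda>x. poly p x * omega \<tau> t x) \<longlongrightarrow> 0) at_bot"
    by (rule Lim_null_comparison[OF _ l2]) (use M in auto)
qed

lemma ibp:
  "integral\<^sup>L lborel (\<lambda>x. poly (pderiv q) x * omega \<tau> t x)
   = integral\<^sup>L lborel (\<lambda>x. poly (q * vpol \<tau> t) x * omega \<tau> t x)"
proof -
  let ?F = "\<lambda>x. poly q x * omega \<tau> t x"
  let ?f = "\<lambda>x. poly (pderiv q - q * vpol \<tau> t) x * omega \<tau> t x"
  have der: "(?F has_vector_derivative ?f x) (at x)" for x
  proof -
    have "(?F has_real_derivative (poly (pderiv q) x * omega \<tau> t x + (- poly (vpol \<tau> t) x * omega \<tau> t x) * poly q x)) (at x)"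
      by (rule DERIV_mult[OF poly_DERIV omega_deriv])
    then show ?thesis
      by (simp add: has_real_derivative_iff_has_vector_derivative[symmetric] algebra_simps)
  qed
  have cont: "isCont ?f x" for x
    unfolding omega_def by (intro continuous_intros)
  have intf: "integrable lborel ?f" by (rule integrable_poly_w)
  have "(LBINT x=-\<infinity>..\<infinity>. ?f x) = 0 - 0"
    by (rule interval_integral_FTC_integrable[where F="?F"])
       (use der cont intf poly_w_lim in \<open>auto simp: ereal_tendsto_simps1 set_integrable_def\<close>)
  then have "integral\<^sup>L lborel ?f = 0"
    by (simp add: interval_lebesgue_integral_def set_lebesgue_integral_def)
  moreover have "integral\<^sup>L lborel ?f = integral\<^sup>L lborel (\<lambda>x. poly (pderiv q) x * omega \<tau> t x)
      - integral\<^sup>L lborel (\<lambda>x. poly (q * vpol \<tau> t) x * omega \<tau> t x)"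
  proof -
    have e: "?f = (\<lambda>x. poly (pderiv q) x * omega \<tau> t x - poly (q * vpol \<tau> t) x * omega \<tau> t x)"
      by (auto simp: fun_eq_iff algebra_simps)
    show ?thesis unfolding e by (rule Bochner_Integration.integral_diff[OF integrable_poly_w integrable_poly_w])
  qed
  ultimately show ?thesis by simp
qed

lemma L_sq_zero:
  assumes "integral\<^sup>L lborel (\<lambda>x. poly (q * q) x * omega \<tau> t x) = 0"
  shows "q = 0"
proof (rule ccontr)
  assume q: "q \<noteq> 0"
  have int: "integrable lborel (\<lambda>x. poly (q*q) x * omega \<tau> t x)" by (rule integrable_poly_w)
  have nn: "AE x in lborel. 0 \<le> poly (q*q) x * omega \<tau> t x" by (auto simp: omega_def)
  have "AE x in lborel. poly (q * q) x * omega \<tau> t x = 0"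
    using assms integral_nonneg_eq_0_iff_AE[OF int nn] by simp
  moreover have "AE x in lborel. x \<notin> {x. poly q x = 0}"
    using q by (intro AE_not_in finite_imp_null_set_lborel poly_roots_finite)
  ultimately have "AE x::real in lborel. False"
  proof eventually_elim
    case (elim x) then show False by (auto simp: omega_def)
  qed
  then have "emeasure (lborel::real measure) (space lborel) = 0"
    by (metis ae_filter_eq_bot_iff eventually_False)
  then show False by simp
qed

fun mom :: "(int \<Rightarrow> real) \<Rightarrow> nat \<Rightarrow> int \<Rightarrow> int \<Rightarrow> real" where
  "mom b 0 a k = (if a = k then 1 else 0)"
| "mom b (Suc j) a k = mom b j (a + 1) k + b a * mom b j (a - 1) k"

lemma mom_far: "j < \<bar>a - k\<bar> \<Longrightarrow> mom b j a k = 0"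
  by (induction j arbitrary: a) auto

definition "VV \<tau> t = [:0, -2*t, 0, -4*\<tau>, 0, 6:]"
definition "BB (bb::int\<Rightarrow>real) \<tau> = [:0, 2*bb 0*(3*(bb (-1) + bb 0 + bb 1) - 2*\<tau>), 0, 6*bb 0:]"
definition "AA (bb::int\<Rightarrow>real) \<tau> t = [:6*(bb 0*(bb (-1) + bb 0 + bb 1) + bb 1*(bb 0 + bb 1 + bb 2)) - 4*\<tau>*(bb 0 + bb 1) - 2*t,
    0, 6*(bb 0 + bb 1) - 4*\<tau>, 0, 6:]"

lemma sum5: "(\<Sum>j\<le>(5::nat). f j) = f 0 + f 1 + f 2 + f 3 + f 4 + (f 5::real)"
  by (simp add: numeral_eq_Suc)

lemma formal1:
  fixes bb :: "int \<Rightarrow> real" and d :: int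
  shows "(if d < 0 then (\<Sum>j\<le>5. coeff (VV \<tau> t) j * mom bb j 0 d) else 0)
    + (\<Sum>j\<le>5. coeff (BB bb \<tau>) j * mom bb j 0 d)
    - bb 0 * (\<Sum>j\<le>5. coeff (AA bb \<tau> t) j * mom bb j (-1) d) = 0"
proof (cases "\<bar>d\<bar> \<le> 6")
  case False
  then have "mom bb j 0 d = 0" "mom bb j (-1) d = 0" if "j \<le> 5" for j
    using that by (auto intro!: mom_far)
  then show ?thesis by simp
next
  case True
  then have "-6 \<le> d \<and> d \<le> 6" by auto
  then have "d = -6 \<or> d = -5 \<or> d = -4 \<or> d = -3 \<or> d = -2 \<or> d = -1 \<or> d = 0 \<or> d = 1 \<or> d = 2 \<or> d = 3 \<or> d = 4 \<or> d = 5 \<or> d = 6" by presburger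
  then show ?thesis
    by (auto simp: sum5 VV_def BB_def AA_def numeral_eq_Suc algebra_simps)
qed

lemma formal2:
  fixes bb :: "int \<Rightarrow> real" and d :: int
  shows "(if d < -1 then (\<Sum>j\<le>5. coeff (VV \<tau> t) j * mom bb j (-1) d) else 0)
    - (\<Sum>j\<le>5. coeff (BB bb \<tau>) j * mom bb j (-1) d)
    - (\<Sum>j\<le>5. coeff (VV \<tau> t) j * mom bb j (-1) d)
    + (\<Sum>j\<le>5. coeff (AA (\<lambda>i. bb (i - 1)) \<tau> t) j * mom bb j 0 d) = 0"
proof (cases "\<bar>d\<bar> \<le> 6")
  case False
  then have "mom bb j 0 d = 0" "mom bb j (-1) d = 0" if "j \<le> 5" for j
    using that by (auto intro!: mom_far)
  then show ?thesis by simp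
next
  case True
  then have "-6 \<le> d \<and> d \<le> 6" by auto
  then have "d = -6 \<or> d = -5 \<or> d = -4 \<or> d = -3 \<or> d = -2 \<or> d = -1 \<or> d = 0 \<or> d = 1 \<or> d = 2 \<or> d = 3 \<or> d = 4 \<or> d = 5 \<or> d = 6" by presburger
  then show ?thesis
    by (auto simp: sum5 VV_def BB_def AA_def numeral_eq_Suc algebra_simps)
qed

lemma nat_1_plus_int[simp]: "nat (1 + int m) = Suc m"
  by arith

locale ops =
  fixes \<tau> t :: real and P :: "nat \<Rightarrow> real poly" and \<beta> :: "nat \<Rightarrow> real"
  assumes mops: "monic_OPS (omega \<tau> t) P" and rc: "rec_coeffs P \<beta>"
begin

definition L :: "real poly \<Rightarrow> real" where
  "L q = integral\<^sup>L lborel (\<lambda>x. poly q x * omega \<tau> t x)"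

lemma L_add: "L (p + q) = L p + L q"
  unfolding L_def poly_add distrib_right
  by (rule Bochner_Integration.integral_add[OF integrable_poly_w integrable_poly_w])

lemma L_diff: "L (p - q) = L p - L q"
  unfolding L_def poly_diff left_diff_distrib
  by (rule Bochner_Integration.integral_diff[OF integrable_poly_w integrable_poly_w])

lemma L_smult: "L (smult c p) = c * L p"
  unfolding L_def poly_smult mult.assoc by (rule integral_mult_right_zero)

lemma L_zero[simp]: "L 0 = 0"
  unfolding L_def by simp

lemma L_minus: "L (- p) = - L p"
  using L_smult[of "-1" p] by simp

lemma L_sum: "L (sum f A) = (\<Sum>a\<in>A. L (f a))"
  by (induction A rule: infinite_finite_induct) (auto simp: L_add)

lemma degP: "degree (P n) = n"
  using mops unfolding monic_OPS_def by blast

lemma leadP: "lead_coeff (P n) = 1"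
  using mops unfolding monic_OPS_def by blast

lemma P_nz: "P n \<noteq> 0"
  using leadP[of n] by auto

lemma orth: "m \<noteq> n \<Longrightarrow> L (P m * P n) = 0"
  using mops unfolding monic_OPS_def L_def by (simp add: mult.assoc)

lemma beta0: "\<beta> 0 = 0"
  using rc unfolding rec_coeffs_def by simp

lemma recX: "[:0,1:] * P a = P (Suc a) + smult (\<beta> a) (P (a - 1))"
  using rc beta0 unfolding rec_coeffs_def by (cases a) auto

lemma span:
  assumes "\<And>k. k < m \<Longrightarrow> L (E * P k) = 0"
  shows "degree q < m \<Longrightarrow> L (E * q) = 0"
  using assms
proof (induction m arbitrary: q)
  case 0 then show ?case by simp
next
  case (Suc m)
  show ?case
  proof (cases "degree q < m")
    case True then show ?thesis using Suc by auto
  next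
    case False
    with Suc.prems have dq: "degree q = m" by simp
    define c where "c = lead_coeff q"
    define r where "r = q - smult c (P m)"
    have "L (E * r) = 0"
    proof (cases "r = 0")
      case True then show ?thesis by simp
    next
      case False
      have "degree r \<le> m" unfolding r_def using dq degP[of m]
        by (intro degree_diff_le) auto
      moreover have "coeff r m = 0" unfolding r_def c_def using dq leadP[of m] degP[of m] by simp
      ultimately have "degree r < m" using False
        by (metis le_neq_implies_less leading_coeff_0_iff)
      then show ?thesis using Suc by auto
    qed
    moreover have "q = r + smult c (P m)" unfolding r_def by simp
    then have "E * q = E * r + smult c (E * P m)" by (simp add: algebra_simps)
    ultimately show ?thesis using Suc.prems(2)[of m] by (simp add: L_add L_smult)
  qed
qed

lemma orth_low: "degree q < n \<Longrightarrow> L (q * P n) = 0"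
  using span[of n "P n" q] orth by (simp add: mult.commute)

lemma complete:
  assumes "\<And>k. L (E * P k) = 0"
  shows "E = 0"
proof -
  have "L (E * E) = 0" using span[of "Suc (degree E)" E E] assms by simp
  then show ?thesis using L_sq_zero unfolding L_def by blast
qed

definition h :: "nat \<Rightarrow> real" where "h k = L (P k * P k)"

definition bz :: "int \<Rightarrow> real" where "bz i = (if i < 0 then 0 else \<beta> (nat i))"

lemma momL: "L ([:0,1:]^j * P a * P k) = mom bz j (int a) (int k) * h k"
proof (induction j arbitrary: a)
  case 0 then show ?case using orth[of a k] by (simp add: h_def)
next
  case (Suc j)
  have "[:0,1:]^Suc j * P a * P k = [:0,1:]^j * ([:0,1:] * P a) * P k"
    by (simp only: power_Suc2 mult.assoc)
  also have "\<dots> = [:0,1:]^j * (P (Suc a) + smult (\<beta> a) (P (a - 1))) * P k"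
    by (simp only: recX)
  also have "\<dots> = [:0,1:]^j * P (Suc a) * P k + smult (\<beta> a) ([:0,1:]^j * P (a - 1) * P k)"
    by (simp add: distrib_left distrib_right)
  finally have "L ([:0,1:]^Suc j * P a * P k) = L ([:0,1:]^j * P (Suc a) * P k) + \<beta> a * L ([:0,1:]^j * P (a - 1) * P k)"
    by (simp add: L_add L_smult)
  also have "\<dots> = mom bz j (int a + 1) k * h k + \<beta> a * (mom bz j (int (a - 1)) k * h k)"
    using Suc.IH[of "Suc a"] Suc.IH[of "a - 1"] by (simp add: add.commute)
  finally have *: "L ([:0,1:]^Suc j * P a * P k) = mom bz j (int a + 1) k * h k + \<beta> a * (mom bz j (int (a - 1)) k * h k)" .
  have "\<beta> a * mom bz j (int (a - 1)) k = bz (int a) * mom bz j (int a - 1) k"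
    by (cases a) (auto simp: bz_def beta0)
  then show ?case using * by (simp add: algebra_simps)
qed

lemma polyL:
  assumes "degree q \<le> 5"
  shows "L (q * P a * P k) = (\<Sum>j\<le>5. coeff q j * mom bz j (int a) (int k)) * h k"
proof -
  have "q * P a * P k = (\<Sum>j\<le>5. monom (coeff q j) j) * P a * P k"
    using poly_as_sum_of_monoms'[OF assms] by simp
  also have "\<dots> = (\<Sum>j\<le>5. monom (coeff q j) j * P a * P k)"
    by (simp add: sum_distrib_right)
  also have "\<dots> = (\<Sum>j\<le>5. smult (coeff q j) ([:0,1:]^j * P a * P k))"
    by (rule sum.cong) (simp_all add: monom_altdef)
  finally have "L (q * P a * P k) = (\<Sum>j\<le>5. coeff q j * L ([:0,1:]^j * P a * P k))"
    by (simp add: L_sum L_smult)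
  also have "\<dots> = (\<Sum>j\<le>5. coeff q j * (mom bz j (int a) (int k) * h k))"
    by (rule sum.cong) (simp_all only: momL)
  finally show ?thesis by (simp add: sum_distrib_right mult.assoc)
qed

lemma deriv_test: "L (pderiv (P n) * P k) = (if k < n then L (vpol \<tau> t * P n * P k) else 0)"
proof (cases "k < n")
  case True
  have "L (pderiv (P n * P k)) = L (P n * P k * vpol \<tau> t)" using ibp unfolding L_def by blast
  moreover have "L (P n * pderiv (P k)) = 0"
    using orth_low[of "pderiv (P k)" n] True by (simp add: degree_pderiv degP mult.commute)
  ultimately show ?thesis using True by (simp add: pderiv_mult L_add algebra_simps)
next
  case False
  show ?thesis
  proof (cases n)
    case 0
    then have "pderiv (P n) = 0" using degP[of n] by (simp add: pderiv_eq_0_iff)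
    then show ?thesis using False by simp
  next
    case (Suc m)
    then show ?thesis using False orth_low[of "pderiv (P n)" k] by (simp add: degree_pderiv degP)
  qed
qed

lemma shift: "mom b j x y = mom (\<lambda>i. b (s + i)) j (x - s) (y - s)"
  by (induction j arbitrary: x) (auto simp: algebra_simps)

end

context ops begin

definition Bp :: "nat \<Rightarrow> real poly" where
  "Bp n = [:0, 2*\<beta> n*(3*Cc \<beta> n - 2*\<tau>), 0, 6*\<beta> n:]"

definition Ap :: "nat \<Rightarrow> real poly" where
  "Ap n = [:6*(\<beta> n * Cc \<beta> n + \<beta> (n+1) * Cc \<beta> (n+1)) - 4*\<tau>*(\<beta> n + \<beta> (n+1)) - 2*t,
           0, 6*(\<beta> n + \<beta> (n+1)) - 4*\<tau>, 0, 6:]"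

lemma deg_Bp: "degree (Bp n) \<le> 5"
  unfolding Bp_def by (simp add: degree_pCons_eq_if)
lemma deg_Ap: "degree (Ap n) \<le> 5"
  unfolding Ap_def by (simp add: degree_pCons_eq_if)
lemma deg_vpol: "degree (vpol \<tau> t) \<le> 5"
  unfolding vpol_def by (simp add: degree_pCons_eq_if)

lemma vpol_VV: "vpol \<tau> t = VV \<tau> t"
  by (simp add: vpol_def VV_def)

lemma bz_nat: "bz (int m) = \<beta> m"
  by (simp add: bz_def)

lemma bz_facts:
  assumes "n \<ge> 1"
  shows "bz (int n) = \<beta> n" "bz (int n + 1) = \<beta> (n+1)" "bz (int n + 2) = \<beta> (n+2)"
    "bz (int n - 1) = \<beta> (n - 1)" "bz (int n - 2) = \<beta> (n - 1 - 1)"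
proof -
  show "bz (int n) = \<beta> n" by (rule bz_nat)
  have "int n + 1 = int (n+1)" by simp
  then show "bz (int n + 1) = \<beta> (n+1)" using bz_nat by metis
  have "int n + 2 = int (n+2)" by simp
  then show "bz (int n + 2) = \<beta> (n+2)" using bz_nat by metis
  have "int n - 1 = int (n - 1)" using assms by simp
  then show "bz (int n - 1) = \<beta> (n - 1)" using bz_nat by metis
  show "bz (int n - 2) = \<beta> (n - 1 - 1)"
  proof (cases "n = 1")
    case True then show ?thesis by (simp add: bz_def beta0)
  next
    case False
    then have "int n - 2 = int (n - 1 - 1)" using assms by simp
    then show ?thesis using bz_nat by metis
  qed
qed

lemma ladder1:
  assumes n: "n \<ge> 1"
  shows "pderiv (P n) = - (Bp n * P n) + smult (\<beta> n) (Ap n * P (n - 1))"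
proof -
  define D where "D = pderiv (P n) + Bp n * P n - smult (\<beta> n) (Ap n * P (n - 1))"
  have "L (D * P k) = 0" for k
  proof -
    define bb where "bb = (\<lambda>i. bz (int n + i))"
    define d where "d = int k - int n"
    have m0: "mom bz j (int n) (int k) = mom bb j 0 d" for j
      using shift[of bz j "int n" "int k" "int n"] by (simp add: bb_def d_def)
    have m1: "mom bz j (int (n - 1)) (int k) = mom bb j (-1) d" for j
      using shift[of bz j "int (n - 1)" "int k" "int n"] n by (simp add: bb_def d_def of_nat_diff)
    have eB: "Bp n = BB bb \<tau>" using bz_facts[OF n]
      by (simp add: Bp_def BB_def Cc_def bb_def)
    have eA: "Ap n = AA bb \<tau> t" using bz_facts[OF n]
      by (simp add: Ap_def AA_def Cc_def bb_def)
    have eb: "\<beta> n = bb 0" using bz_facts[OF n] by (simp add: bb_def)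
    have ek: "(k < n) = (d < 0)" by (simp add: d_def)
    have "D * P k = pderiv (P n) * P k + Bp n * P n * P k - smult (\<beta> n) (Ap n * P (n - 1) * P k)"
      unfolding D_def by (simp add: distrib_right left_diff_distrib)
    then have "L (D * P k) = L (pderiv (P n) * P k) + L (Bp n * P n * P k) - \<beta> n * L (Ap n * P (n - 1) * P k)"
      by (simp only: L_add L_diff L_smult)
    also have "\<dots> = h k * ((if k < n then (\<Sum>j\<le>5. coeff (vpol \<tau> t) j * mom bz j (int n) (int k)) else 0)
        + (\<Sum>j\<le>5. coeff (Bp n) j * mom bz j (int n) (int k))
        - \<beta> n * (\<Sum>j\<le>5. coeff (Ap n) j * mom bz j (int (n - 1)) (int k)))"
      apply (simp add: deriv_test polyL[OF deg_vpol] polyL[OF deg_Bp] polyL[OF deg_Ap])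
      apply (intro conjI impI; simp only: right_diff_distrib distrib_left mult.commute mult.left_commute)
      done
    also have "(if k < n then (\<Sum>j\<le>5. coeff (vpol \<tau> t) j * mom bz j (int n) (int k)) else 0)
        + (\<Sum>j\<le>5. coeff (Bp n) j * mom bz j (int n) (int k))
        - \<beta> n * (\<Sum>j\<le>5. coeff (Ap n) j * mom bz j (int (n - 1)) (int k)) = 0"
      unfolding m0 m1 eB eA eb ek vpol_VV by (rule formal1)
    finally show ?thesis by simp
  qed
  then have "D = 0" by (rule complete)
  moreover have "pderiv (P n) = D - Bp n * P n + smult (\<beta> n) (Ap n * P (n - 1))"
    by (simp add: D_def)
  ultimately show ?thesis by simp
qed

lemma ladder2:
  assumes n: "n \<ge> 1"
  shows "pderiv (P (n - 1)) = (Bp n + vpol \<tau> t) * P (n - 1) - Ap (n - 1) * P n"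
proof -
  define E where "E = pderiv (P (n - 1)) - (Bp n + vpol \<tau> t) * P (n - 1) + Ap (n - 1) * P n"
  have "L (E * P k) = 0" for k
  proof -
    define bb where "bb = (\<lambda>i. bz (int n + i))"
    define d where "d = int k - int n"
    have m0: "mom bz j (int n) (int k) = mom bb j 0 d" for j
      using shift[of bz j "int n" "int k" "int n"] by (simp add: bb_def d_def)
    have m1: "mom bz j (int (n - 1)) (int k) = mom bb j (-1) d" for j
      using shift[of bz j "int (n - 1)" "int k" "int n"] n by (simp add: bb_def d_def of_nat_diff)
    have eB: "Bp n = BB bb \<tau>" using bz_facts[OF n]
      by (simp add: Bp_def BB_def Cc_def bb_def)
    have eA: "Ap (n - 1) = AA (\<lambda>i. bb (i - 1)) \<tau> t" using bz_facts[OF n] n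
      by (simp add: Ap_def AA_def Cc_def bb_def)
    have ek: "(k < n - 1) = (d < -1)" using n by (auto simp: d_def)
    have "E * P k = pderiv (P (n - 1)) * P k - Bp n * P (n - 1) * P k - vpol \<tau> t * P (n - 1) * P k + Ap (n - 1) * P n * P k"
      unfolding E_def by (simp add: distrib_right left_diff_distrib)
    then have "L (E * P k) = L (pderiv (P (n - 1)) * P k) - L (Bp n * P (n - 1) * P k) - L (vpol \<tau> t * P (n - 1) * P k) + L (Ap (n - 1) * P n * P k)"
      by (simp only: L_add L_diff)
    also have "\<dots> = h k * ((if k < n - 1 then (\<Sum>j\<le>5. coeff (vpol \<tau> t) j * mom bz j (int (n - 1)) (int k)) else 0)
        - (\<Sum>j\<le>5. coeff (Bp n) j * mom bz j (int (n - 1)) (int k))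
        - (\<Sum>j\<le>5. coeff (vpol \<tau> t) j * mom bz j (int (n - 1)) (int k))
        + (\<Sum>j\<le>5. coeff (Ap (n - 1)) j * mom bz j (int n) (int k)))"
      apply (simp only: deriv_test polyL[OF deg_vpol] polyL[OF deg_Bp] polyL[OF deg_Ap])
      apply (cases "k < n - 1"; simp only: if_True if_False right_diff_distrib distrib_left mult.commute mult.left_commute mult_zero_right mult_zero_left add_0_left diff_0)
      done
    also have "(if k < n - 1 then (\<Sum>j\<le>5. coeff (vpol \<tau> t) j * mom bz j (int (n - 1)) (int k)) else 0)
        - (\<Sum>j\<le>5. coeff (Bp n) j * mom bz j (int (n - 1)) (int k))
        - (\<Sum>j\<le>5. coeff (vpol \<tau> t) j * mom bz j (int (n - 1)) (int k))
        + (\<Sum>j\<le>5. coeff (Ap (n - 1)) j * mom bz j (int n) (int k)) = 0"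
      unfolding m0 m1 eB eA ek vpol_VV by (rule formal2)
    finally show ?thesis by simp
  qed
  then have "E = 0" by (rule complete)
  moreover have "pderiv (P (n - 1)) = E + (Bp n + vpol \<tau> t) * P (n - 1) - Ap (n - 1) * P n"
    by (simp add: E_def)
  ultimately show ?thesis by simp
qed

end

lemma final_alg:
  fixes a a' az b b' bn vv p pd pdd q qd R T :: real
  assumes a: "a \<noteq> 0"
    and e1: "pd = -(b*p) + bn*(a*q)"
    and e2: "pdd = -(b'*p + b*pd) + bn*(a'*q + a*qd)"
    and e3: "qd = (b+vv)*q - az*p"
    and R: "R = -vv - a'/a"
    and T: "T = b' - b*(b+vv) + bn*a*az - b*a'/a"
  shows "pdd + R*pd + T*p = 0"
proof -
  have Ra: "R*a = - (vv*a) - a'" using a by (simp add: R field_simps)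
  have Ta: "T*a = (b' - b*(b+vv) + bn*a*az)*a - b*a'" using a by (simp add: T field_simps)
  have "a*(pdd + R*pd + T*p) = a*pdd + (R*a)*pd + (T*a)*p" by (simp add: algebra_simps)
  also have "\<dots> = 0" unfolding Ra Ta using e1 e2 e3 by algebra
  finally show ?thesis using a by simp
qed

theorem theorem4p4:
  fixes \<tau> t :: real and P :: "nat \<Rightarrow> real poly" and \<beta> :: "nat \<Rightarrow> real"
    and n :: nat and x :: real
  assumes "monic_OPS (omega \<tau> t) P"
    and "rec_coeffs P \<beta>"
    and "n \<ge> 1"
    and "6 * x ^ 4 - 4 * \<tau> * x ^ 2 - 2 * t + 6 * \<beta> n * Cc \<beta> n
          + 6 * \<beta> (n + 1) * Cc \<beta> (n + 1) + (\<beta> n + \<beta> (n + 1)) * (6 * x ^ 2 - 4 * \<tau>) \<noteq> 0"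
  shows "poly (pderiv (pderiv (P n))) x + Rn \<beta> \<tau> t n x * poly (pderiv (P n)) x
           + Tn \<beta> \<tau> t n x * poly (P n) x = 0"
proof -
  interpret ops \<tau> t P \<beta> using assms(1,2) by unfold_locales
  have n: "n \<ge> 1" by (rule assms(3))
  note l1 = ladder1[OF n]
  note l2 = ladder2[OF n]
  have dd: "pderiv (pderiv (P n)) = pderiv (- (Bp n * P n) + smult (\<beta> n) (Ap n * P (n - 1)))"
    using l1 by simp
  also have "\<dots> = - (pderiv (Bp n) * P n + Bp n * pderiv (P n))
      + smult (\<beta> n) (pderiv (Ap n) * P (n - 1) + Ap n * pderiv (P (n - 1)))"
    by (simp add: pderiv_mult pderiv_add pderiv_diff pderiv_minus pderiv_smult smult_add_right mult.commute)
  finally have dd: "pderiv (pderiv (P n)) = - (pderiv (Bp n) * P n + Bp n * pderiv (P n))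
      + smult (\<beta> n) (pderiv (Ap n) * P (n - 1) + Ap n * pderiv (P (n - 1)))" .
  define DEN where "DEN = 6 * x ^ 4 - 4 * \<tau> * x ^ 2 - 2 * t + 6 * \<beta> n * Cc \<beta> n
          + 6 * \<beta> (n + 1) * Cc \<beta> (n + 1) + (\<beta> n + \<beta> (n + 1)) * (6 * x ^ 2 - 4 * \<tau>)"
  have DEN: "DEN \<noteq> 0" using assms(4) by (simp add: DEN_def)
  have ha: "poly (Ap n) x = DEN"
    by (simp add: Ap_def DEN_def; algebra)
  have ha': "poly (pderiv (Ap n)) x = 4*x*(6*x^2 - 2*\<tau> + 3*(\<beta> n + \<beta> (n+1)))"
    by (simp add: Ap_def pderiv_pCons; algebra)
  have hb: "poly (Bp n) x = 2*x*\<beta> n*(3*Cc \<beta> n - 2*\<tau> + 3*x^2)"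
    by (simp add: Bp_def; algebra)
  have hb': "poly (pderiv (Bp n)) x = 2*\<beta> n*(3*Cc \<beta> n - 2*\<tau> + 9*x^2)"
    by (simp add: Bp_def pderiv_pCons; algebra)
  have ha0: "poly (Ap (n - 1)) x = 6 * Cc \<beta> (n - 1) * \<beta> (n - 1) + 6 * Cc \<beta> n * \<beta> n
               + (\<beta> (n - 1) + \<beta> n) * (6 * x ^ 2 - 4 * \<tau>) - 2 * t + 6 * x ^ 4 - 4 * \<tau> * x ^ 2"
    using n by (simp add: Ap_def; algebra)
  have hR: "Rn \<beta> \<tau> t n x = - poly (vpol \<tau> t) x - poly (pderiv (Ap n)) x / poly (Ap n) x"
    unfolding ha ha' poly_vpol Rn_def DEN_def[symmetric] using DEN
    by (simp add: field_simps; algebra)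
  have hT: "Tn \<beta> \<tau> t n x = poly (pderiv (Bp n)) x - poly (Bp n) x * (poly (Bp n) x + poly (vpol \<tau> t) x)
      + \<beta> n * poly (Ap n) x * poly (Ap (n - 1)) x - poly (Bp n) x * poly (pderiv (Ap n)) x / poly (Ap n) x"
  proof -
    have D2: "2 * \<tau> * (\<beta> n + \<beta> (n + 1)) - 3 * x ^ 2 * (\<beta> n + \<beta> (n + 1))
          - 3 * Cc \<beta> n * \<beta> n - 3 * Cc \<beta> (n + 1) * \<beta> (n + 1) + t - 3 * x ^ 4 + 2 * \<tau> * x ^ 2 = - DEN / 2"
      unfolding DEN_def by algebra
    have t3: "6 * Cc \<beta> n * \<beta> n + 6 * Cc \<beta> (n + 1) * \<beta> (n + 1)
               + (\<beta> n + \<beta> (n + 1)) * (6 * x ^ 2 - 4 * \<tau>) - 2 * t + 6 * x ^ 4 - 4 * \<tau> * x ^ 2 = DEN"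
      unfolding DEN_def by algebra
    have t4: "4 * x ^ 2 * \<beta> n * (3 * Cc \<beta> n - 2 * \<tau> + 3 * x ^ 2)
         * (3 * (\<beta> n + \<beta> (n + 1)) - 2 * \<tau> + 6 * x ^ 2) / (- DEN / 2)
        = - (2*x*\<beta> n*(3*Cc \<beta> n - 2*\<tau> + 3*x^2) * (4*x*(6*x^2 - 2*\<tau> + 3*(\<beta> n + \<beta> (n+1)))) / DEN)"
      using DEN by (simp add: field_simps) algebra
    show ?thesis
      unfolding ha ha' hb hb' ha0 poly_vpol Tn_def D2 t3 t4 by algebra
  qed
  show ?thesis
  proof (rule final_alg[where a="poly (Ap n) x" and q="poly (P (n - 1)) x" and qd="poly (pderiv (P (n - 1))) x"])
    show "poly (Ap n) x \<noteq> 0" using ha DEN by simp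
    show "poly (pderiv (P n)) x = - (poly (Bp n) x * poly (P n) x) + \<beta> n * (poly (Ap n) x * poly (P (n - 1)) x)"
      by (subst l1) simp
    show "poly (pderiv (pderiv (P n))) x = - (poly (pderiv (Bp n)) x * poly (P n) x + poly (Bp n) x * poly (pderiv (P n)) x)
        + \<beta> n * (poly (pderiv (Ap n)) x * poly (P (n - 1)) x + poly (Ap n) x * poly (pderiv (P (n - 1))) x)"
      by (subst dd) simp
    show "poly (pderiv (P (n - 1))) x = (poly (Bp n) x + poly (vpol \<tau> t) x) * poly (P (n - 1)) x - poly (Ap (n - 1)) x * poly (P n) x"
      by (subst l2) simp
  qed (rule hR, rule hT)
qed

end
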